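(* Let $p>1$ be an integer and let $u^{(p)}$ be the fixed point of the substitution $\varphi_p(L)=L^pS$, $\varphi_p(S)=M$, $\varphi_p(M)=L^{p-1}S$. Then $\mathrm{AC}(n)\ge 3$ for all $n\in\mathbb N$.
   Context: $u^{(p)}=\lim_{n\to\infty}\varphi_p^n(L)$. For a finite word $w$, its Parikh vector is $\Psi(w)=(|w|_L,|w|_S,|w|_M)$, where $|w|_a$ is the number of occurrences of $a$ in $w$. The Abelian complexity of $u^{(p)}$ is $\mathrm{AC}(n)=\#\{\Psi(w): w \text{ a factor of } u^{(p)} \text{ of length } n\}$. *)

theory Defs
  imports Main
begin

datatype letter = L | S | M

fun phi :: "nat \<Rightarrow> letter \<Rightarrow> letter list" where
  "phi p L = replicate p L @ [S]"
| "phi p S = [M]"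
| "phi p M = replicate (p - 1) L @ [S]"

definition phi_word :: "nat \<Rightarrow> letter list \<Rightarrow> letter list" where
  "phi_word p w = concat (map (phi p) w)"

definition phi_pow_L :: "nat \<Rightarrow> nat \<Rightarrow> letter list" where
  "phi_pow_L p n = (phi_word p ^^ n) [L]"

text \<open>The fixed point u^(p) = lim phi_p^n(L), as an infinite word nat => letter:
  the i-th letter is the letter that position i of phi_p^n(L) eventually
  (for all large n) carries.\<close>
definition u :: "nat \<Rightarrow> nat \<Rightarrow> letter" where
  "u p i = (THE a. \<exists>N. \<forall>n\<ge>N. i < length (phi_pow_L p n) \<and> phi_pow_L p n ! i = a)"

definition parikh :: "letter list \<Rightarrow> nat \<times> nat \<times> nat" where
  "parikh w = (count_list w L, count_list w S, count_list w M)"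

definition factor :: "nat \<Rightarrow> nat \<Rightarrow> nat \<Rightarrow> letter list" where
  "factor p i n = map (u p) [i..<i + n]"

definition AC :: "nat \<Rightarrow> nat \<Rightarrow> nat" where
  "AC p n = card {parikh (factor p i n) | i. True}"

end

theory Submission
  imports Defs
begin

definition W :: "nat \<Rightarrow> nat \<Rightarrow> letter \<Rightarrow> letter list" where
  "W p m x = (phi_word p ^^ m) [x]"

lemma pw_append: "phi_word p (xs @ ys) = phi_word p xs @ phi_word p ys"
  by (simp add: phi_word_def)

lemma pwp_append: "(phi_word p ^^ m) (xs @ ys) = (phi_word p ^^ m) xs @ (phi_word p ^^ m) ys"
  by (induction m) (simp_all add: pw_append)

lemma pwp_Cons: "(phi_word p ^^ m) (x # xs) = W p m x @ (phi_word p ^^ m) xs"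
  using pwp_append[where p=p and m=m and xs="[x]" and ys=xs] by (simp add: W_def)

lemma pwp_Nil: "(phi_word p ^^ m) [] = []"
  by (induction m) (simp_all add: phi_word_def)

lemma pwp_replicate: "(phi_word p ^^ m) (replicate k x) = concat (replicate k (W p m x))"
  by (induction k) (simp_all add: pwp_Nil pwp_Cons)

lemma W_Suc: "W p (Suc m) x = (phi_word p ^^ m) (phi p x)"
  by (simp only: W_def funpow_Suc_right comp_def) (simp add: phi_word_def)

lemma W_Suc_L: "W p (Suc m) L = concat (replicate p (W p m L)) @ W p m S"
  by (simp add: W_Suc pwp_append pwp_replicate pwp_Cons pwp_Nil)
lemma W_Suc_S: "W p (Suc m) S = W p m M"
  by (simp add: W_Suc pwp_Cons pwp_Nil)
lemma W_Suc_M: "W p (Suc m) M = concat (replicate (p - 1) (W p m L)) @ W p m S"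
  by (simp add: W_Suc pwp_append pwp_replicate pwp_Cons pwp_Nil)

lemma W_0: "W p 0 x = [x]" by (simp add: W_def)

lemma len_L: "length (W p (Suc m) L) = p * length (W p m L) + length (W p m S)"
  by (simp add: W_Suc_L length_concat sum_list_replicate)
lemma len_S: "length (W p (Suc m) S) = length (W p m M)"
  by (simp add: W_Suc_S)
lemma len_M: "length (W p (Suc m) M) = (p - 1) * length (W p m L) + length (W p m S)"
  by (simp add: W_Suc_M length_concat sum_list_replicate)

lemma len_pos: "p \<ge> 1 \<Longrightarrow> length (W p m x) \<ge> 1"
proof (induction m arbitrary: x)
  case 0 then show ?case by (simp add: W_0)
next
  case (Suc m)
  have "length (W p m S) \<ge> 1" "length (W p m M) \<ge> 1" using Suc by auto
  then show ?case
    by (cases x; simp only: len_L len_S len_M; linarith)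
qed

lemma len_rec: assumes "p \<ge> 1"
  shows "length (W p (m+3) L) + length (W p m L) = p * length (W p (m+2) L) + length (W p (m+1) L)"
proof -
  have e: "(p - 1) * x + x = p * x" for x using assms by (cases p) auto
  show ?thesis
    using e[of "length (W p m L)"]
    by (simp add: numeral_3_eq_3 numeral_2_eq_2 len_L len_S len_M algebra_simps)
qed

lemma len_gcd: assumes "p \<ge> 1"
  shows "d dvd length (W p m L) \<Longrightarrow> d dvd length (W p (m+1) L) \<Longrightarrow> d dvd length (W p (m+2) L) \<Longrightarrow> d dvd 1"
proof (induction m)
  case 0 then show ?case by (simp add: W_0)
next
  case (Suc m)
  have "d dvd length (W p (m+3) L) + length (W p m L)"
    unfolding len_rec[OF assms] using Suc.prems by (simp add: numeral_2_eq_2)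
  moreover have "d dvd length (W p (m+3) L)" using Suc.prems by (simp add: numeral_3_eq_3 numeral_2_eq_2)
  ultimately have "d dvd length (W p m L)" by (simp add: dvd_add_right_iff)
  then show ?case using Suc by (simp add: numeral_2_eq_2)
qed

lemma len_grow: "p \<ge> 1 \<Longrightarrow> length (W p m L) \<ge> m + 1"
proof (induction m)
  case 0 then show ?case by (simp add: W_0)
next
  case (Suc m)
  have "length (W p m S) \<ge> 1" using len_pos Suc.prems by blast
  moreover have "p * length (W p m L) \<ge> length (W p m L)" using Suc.prems by simp
  ultimately show ?case using Suc unfolding len_L by linarith
qed

lemma W_L_prefix1: assumes "p \<ge> 1" shows "\<exists>r. W p (Suc m) L = W p m L @ r"
proof -
  obtain q where "p = Suc q" using assms by (cases p) auto
  then show ?thesis by (simp add: W_Suc_L)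
qed

lemma W_L_double: assumes "p \<ge> 2" shows "\<exists>r. W p (Suc m) L = W p m L @ W p m L @ r"
proof -
  obtain q where "p = Suc (Suc q)" using assms by (cases p; cases "p - 1") auto
  then show ?thesis by (simp add: W_Suc_L)
qed

lemma W_L_prefix: assumes "p \<ge> 1" "m \<le> k" shows "\<exists>r. W p k L = W p m L @ r"
  using assms(2)
proof (induction k rule: dec_induct)
  case base then show ?case by simp
next
  case (step k)
  then obtain r where "W p k L = W p m L @ r" by blast
  moreover obtain r' where "W p (Suc k) L = W p k L @ r'" using W_L_prefix1[OF assms(1)] by blast
  ultimately show ?case by auto
qed

lemma u_eq: assumes "p \<ge> 1" "i < length (W p m L)" shows "u p i = W p m L ! i"
proof -
  have pw: "phi_pow_L p n = W p n L" for n by (simp add: phi_pow_L_def W_def)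
  have key: "i < length (W p n L) \<and> W p n L ! i = W p m L ! i" if nm: "n \<ge> m" for n
  proof -
    obtain r where "W p n L = W p m L @ r" using W_L_prefix[OF assms(1) nm] by blast
    then show ?thesis using assms(2) by (simp add: nth_append)
  qed
  show ?thesis unfolding u_def pw
  proof (rule the_equality)
    show "\<exists>N. \<forall>n\<ge>N. i < length (W p n L) \<and> W p n L ! i = W p m L ! i"
      using key by blast
  next
    fix a assume "\<exists>N. \<forall>n\<ge>N. i < length (W p n L) \<and> W p n L ! i = a"
    then obtain N where N: "\<forall>n\<ge>N. i < length (W p n L) \<and> W p n L ! i = a" by blast
    have "W p (max N m) L ! i = a" using N by simp
    moreover have "W p (max N m) L ! i = W p m L ! i" using key[of "max N m"] by simp
    ultimately show "a = W p m L ! i" by simp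
  qed
qed

lemma u_shift: assumes "p \<ge> 2" "i < length (W p m L)"
  shows "u p (i + length (W p m L)) = u p i"
proof -
  obtain r where r: "W p (Suc m) L = W p m L @ W p m L @ r" using W_L_double[OF assms(1)] by blast
  have "u p (i + length (W p m L)) = W p (Suc m) L ! (i + length (W p m L))"
    using assms by (intro u_eq) (auto simp: r)
  also have "\<dots> = W p m L ! i" using assms(2) by (simp add: r nth_append)
  also have "\<dots> = u p i" using assms by (intro u_eq[symmetric]) auto
  finally show ?thesis .
qed

lemma u_0: assumes "p \<ge> 1" shows "u p 0 = L"
  using u_eq[OF assms, of 0 0] by (simp add: W_0)

lemma u_p: assumes "p \<ge> 1" shows "u p p = S"
proof -
  have "W p 1 L = replicate p L @ [S]" by (simp add: W_Suc_L W_0)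
  then show ?thesis using u_eq[OF assms, of p 1] by (simp add: nth_append)
qed

lemma u_M: assumes "p \<ge> 1" shows "u p (p * (p + 1)) = M"
proof -
  have "W p 2 L = concat (replicate p (replicate p L @ [S])) @ [M]"
    by (simp add: numeral_2_eq_2 W_Suc_L W_Suc_S W_0)
  moreover have "length (concat (replicate p (replicate p L @ [S]))) = p * (p + 1)"
    by (simp add: length_concat sum_list_replicate)
  ultimately show ?thesis using u_eq[OF assms, of "p * (p + 1)" 2]
    by (simp add: nth_append)
qed

definition per :: "(nat \<Rightarrow> bool) \<Rightarrow> nat \<Rightarrow> bool" where
  "per f t \<longleftrightarrow> (\<forall>i. f (i + t) = f i)"

lemma per_k: "per f n \<Longrightarrow> f (i + k * n) = f i"
proof (induction k)
  case 0 then show ?case by simp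
next
  case (Suc k)
  have "f (i + Suc k * n) = f ((i + k * n) + n)" by (simp add: algebra_simps)
  also have "\<dots> = f (i + k * n)" using Suc.prems by (simp add: per_def)
  finally show ?case using Suc by simp
qed

lemma per_ext: assumes "per f n" "n > 0" "t \<ge> n" "\<forall>i<t. f (i + t) = f i"
  shows "per f t"
  unfolding per_def
proof
  fix i
  have "i mod n < t" using assms(2,3) by (meson mod_less_divisor order_less_le_trans)
  have "f (i + t) = f ((i mod n + t) + (i div n) * n)"
    by (metis add.commute add.left_commute div_mult_mod_eq)
  also have "\<dots> = f (i mod n + t)" by (rule per_k[OF assms(1)])
  also have "\<dots> = f (i mod n)" using assms(4) \<open>i mod n < t\<close> by blast
  also have "\<dots> = f (i mod n + (i div n) * n)" by (rule per_k[OF assms(1), symmetric])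
  also have "\<dots> = f i" by (metis add.commute div_mult_mod_eq)
  finally show "f (i + t) = f i" .
qed

lemma per_mult: assumes "per f a" shows "per f (a * x)"
  unfolding per_def
proof
  fix i show "f (i + a * x) = f i" using per_k[OF assms, of i x] by (simp add: mult.commute)
qed

lemma per_diff: assumes "per f a" "per f b" "b \<le> a" shows "per f (a - b)"
  unfolding per_def
proof
  fix i
  have "f (i + (a - b)) = f (i + (a - b) + b)" using assms(2) by (simp add: per_def)
  also have "\<dots> = f (i + a)" using assms(3) by simp
  also have "\<dots> = f i" using assms(1) by (simp add: per_def)
  finally show "f (i + (a - b)) = f i" .
qed

lemma per_gcd: assumes "per f a" "per f b" "a \<noteq> 0" shows "per f (gcd a b)"
proof -
  obtain x y where xy: "a * x = b * y + gcd a b" using bezout_nat[OF assms(3)] by blast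
  have le: "b * y \<le> a * x" using xy by simp
  have "per f (a * x - b * y)"
    by (rule per_diff[OF per_mult[OF assms(1)] per_mult[OF assms(2)] le])
  then show ?thesis using xy by simp
qed

lemma per_1_const: "per f 1 \<Longrightarrow> f i = f 0"
  by (induction i) (auto simp: per_def)

lemma fac_step: "factor p i n @ [u p (i + n)] = u p i # factor p (Suc i) n"
proof -
  have "[i..<Suc (i + n)] = [i..<i + n] @ [i + n]" by simp
  moreover have "[i..<Suc (i + n)] = i # [Suc i..<Suc i + n]" by (simp add: upt_rec)
  ultimately have "[i..<i + n] @ [i + n] = i # [Suc i..<Suc i + n]" by simp
  then have "map (u p) ([i..<i + n] @ [i + n]) = map (u p) (i # [Suc i..<Suc i + n])" by simp
  then show ?thesis unfolding factor_def by simp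
qed

lemma cnt_step: "count_list (factor p i n) c + (if u p (i + n) = c then 1 else 0)
   = count_list (factor p (Suc i) n) c + (if u p i = c then 1 else 0)"
  using arg_cong[OF fac_step[of p i n], of "\<lambda>w. count_list w c"]
  by (cases "u p i = c"; cases "u p (i + n) = c") simp_all

lemma cnt_const_False:
  assumes p: "p \<ge> 2" and n: "n \<ge> 1" and K: "\<forall>i. count_list (factor p i n) c = K"
  shows False
proof -
  define f where "f i = (u p i = c)" for i
  have p1: "p \<ge> 1" using p by simp
  have pn: "per f n" unfolding per_def f_def
  proof
    fix i show "(u p (i + n) = c) = (u p i = c)"
      using cnt_step[of p i n c] K by (auto split: if_splits)
  qed
  define a where "a j = length (W p (n + j) L)" for j
  have pa: "per f (a j)" for j
  proof (rule per_ext[OF pn])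
    show "0 < n" using n by simp
    show "n \<le> a j" using len_grow[OF p1, of "n + j"] by (simp add: a_def)
    show "\<forall>i<a j. f (i + a j) = f i" using u_shift[OF p] by (simp add: f_def a_def)
  qed
  have "length (W p n L) \<ge> 1" by (rule len_pos[OF p1])
  then have a0: "a 0 \<noteq> 0" unfolding a_def add_0_right by linarith
  have g1: "per f (gcd (a 0) (a 1))" by (rule per_gcd[OF pa pa a0])
  have g1nz: "gcd (a 0) (a 1) \<noteq> 0" using a0 by simp
  have g2: "per f (gcd (gcd (a 0) (a 1)) (a 2))" by (rule per_gcd[OF g1 pa g1nz])
  define g where "g = gcd (gcd (a 0) (a 1)) (a 2)"
  have d0: "g dvd a 0" unfolding g_def by (meson gcd_dvd1 dvd_trans)
  have d1: "g dvd a 1" unfolding g_def by (meson gcd_dvd1 gcd_dvd2 dvd_trans)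
  have d2: "g dvd a 2" unfolding g_def by (meson gcd_dvd2)
  have "g dvd 1"
    by (rule len_gcd[OF p1, of g n]) (use d0 d1 d2 in \<open>simp_all add: a_def\<close>)
  then have "gcd (gcd (a 0) (a 1)) (a 2) dvd 1" by (simp add: g_def)
  then have "per f 1" using g2 by simp
  then have const: "f i = f 0" for i by (rule per_1_const)
  show False
  proof (cases c)
    case L then show ?thesis using const[of p] u_0[OF p1] u_p[OF p1] by (simp add: f_def)
  next
    case S then show ?thesis using const[of p] u_0[OF p1] u_p[OF p1] by (simp add: f_def)
  next
    case M then show ?thesis using const[of "p * (p + 1)"] u_0[OF p1] u_M[OF p1] by (simp add: f_def)
  qed
qed

definition cnt_of :: "letter \<Rightarrow> nat \<times> nat \<times> nat \<Rightarrow> nat" where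
  "cnt_of c x = (case c of L \<Rightarrow> fst x | S \<Rightarrow> fst (snd x) | M \<Rightarrow> snd (snd x))"

lemma cnt_of_parikh: "cnt_of c (parikh w) = count_list w c"
  by (cases c) (simp_all add: cnt_of_def parikh_def)

lemma third_letter: "\<exists>c::letter. c \<noteq> x \<and> c \<noteq> y"
  by (cases x; cases y) (meson letter.distinct)+

theorem proposition8p4:
  fixes p n :: nat
  assumes "p > 1" and "n \<ge> 1"
  shows "AC p n \<ge> 3"
proof -
  have p: "p \<ge> 2" using assms(1) by simp
  define v where "v i = parikh (factor p i n)" for i
  define V where "V = {parikh (factor p i n) | i. True}"
  have Vv: "v i \<in> V" for i by (auto simp: V_def v_def)
  have lenf: "length (factor p i n) = n" for i by (simp add: factor_def)
  have fin: "finite V"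
  proof (rule finite_subset)
    show "V \<subseteq> {0..n} \<times> {0..n} \<times> {0..n}"
    proof
      fix x assume "x \<in> V"
      then obtain k where k: "x = parikh (factor p k n)" by (auto simp: V_def)
      have "count_list (factor p k n) a \<le> n" for a
        using count_le_length[of "factor p k n" a] lenf[of k] by simp
      then show "x \<in> {0..n} \<times> {0..n} \<times> {0..n}" by (simp add: k parikh_def)
    qed
  qed simp
  have "\<exists>i. v (Suc i) \<noteq> v i"
  proof (rule ccontr)
    assume "\<not> ?thesis"
    then have st: "v (Suc k) = v k" for k by blast
    have vk: "v k = v 0" for k by (induction k) (simp_all add: st)
    have "\<forall>k. count_list (factor p k n) L = cnt_of L (v 0)"
    proof
      fix k show "count_list (factor p k n) L = cnt_of L (v 0)"
        using vk[of k] cnt_of_parikh[of L "factor p k n"] by (simp add: v_def)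
    qed
    then show False using cnt_const_False[OF p assms(2)] by blast
  qed
  then obtain i where i: "v (Suc i) \<noteq> v i" by blast
  obtain c where c: "c \<noteq> u p i" "c \<noteq> u p (i + n)" using third_letter by blast
  have eqc: "count_list (factor p (Suc i) n) c = count_list (factor p i n) c"
    using cnt_step[of p i n c] c by simp
  obtain j where j: "count_list (factor p j n) c \<noteq> count_list (factor p i n) c"
    using cnt_const_False[OF p assms(2), of c "count_list (factor p i n) c"] by blast
  have n1: "v j \<noteq> v i"
  proof
    assume "v j = v i"
    then have "cnt_of c (v j) = cnt_of c (v i)" by simp
    then show False using j by (simp add: v_def cnt_of_parikh)
  qed
  have n2: "v j \<noteq> v (Suc i)"
  proof
    assume "v j = v (Suc i)"
    then have "cnt_of c (v j) = cnt_of c (v (Suc i))" by simp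
    then show False using j eqc by (simp add: v_def cnt_of_parikh)
  qed
  have "card {v i, v (Suc i), v j} = 3" using i n1 n2 by (simp add: card_insert_if)
  moreover have "{v i, v (Suc i), v j} \<subseteq> V" using Vv by auto
  ultimately have "3 \<le> card V" using card_mono[OF fin] by (metis)
  then show ?thesis by (simp add: AC_def V_def)
qed

end
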